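(* Let $\Omega\subset\mathbb{R}^d$, let $\Psi$ be a stationary positive definite correlation function with $c_1(1+\|\omega\|_2^2)^{-m_0}\le\mathcal{F}(\Psi)(\omega)\le c_2(1+\|\omega\|_2^2)^{-m_0}$ for all $\omega$ ($m_0>d/2$), and $Z\sim GP(0,\sigma^2\Psi)$. Assume there exist a stationary correlation function $K$ with $c_5(1+\|\omega\|_2^2)^{-m_0}\le\mathcal{F}(K)(\omega)\le c_6(1+\|\omega\|_2^2)^{-m_0}$ and a constant $A_0>0$ such that $\|\mathcal{F}(K)/\mathcal{F}(\Psi)\|_{L_\infty(\mathbb{R}^d)}\le A_0$, and such that in the Mercer expansion $K(x-y)=\sum_k\lambda_k\varphi_k(x)\varphi_k(y)$ on $\Omega$ ($\{\varphi_k\}$ an orthonormal basis of $L_2(\Omega)$, $\lambda_k>0$) one has $\|\varphi_k\|_{L_\infty(\Omega)}\le C$ for all $k$. Let $\{x_1,\dots,x_n\}\subset\Omega$ be design points, $\mu=\sigma_\epsilon^2/\sigma^2>0$, $r(x)=(\Psi(x-x_j))_j$, $R=(\Psi(x_j-x_k))_{jk}$, and $$\mathrm{Var}[Z(x)\mid Y]=\sigma^2\big(\Psi(x-x)-r(x)^T(R+\mu I_n)^{-1}r(x)\big).$$ Then for all $x\in\Omega$, $$\mathrm{Var}[Z(x)\mid Y]\gtrsim K(x-x)-r_K(x)^T(R_K+\mu I_n)^{-1}r_K(x),$$ where $R_K=(K(x_j-x_k))_{jk}$ and $r_K(x)=(K(x-x_1),\dots,K(x-x_n))^T$, and the implicit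 constant does not depend on $x$, $n$ or the design.
   Context: $\mathrm{Var}[Z(x)\mid Y]$ is the conditional variance of $Z(x)$ given noisy observations $Y=(Z(x_k)+\epsilon_k)_k$ with i.i.d. normal noise of variance $\sigma_\epsilon^2$, which equals the displayed formula. Fourier transform $\mathcal{F}(f)(\omega)=(2\pi)^{-d/2}\int f(x)e^{-ix^T\omega}dx$. *)

theory Defs
  imports "HOL-Analysis.Analysis" "Jordan_Normal_Form.Gauss_Jordan_Elimination"
begin

definition fourier :: "('a::euclidean_space \<Rightarrow> real) \<Rightarrow> 'a \<Rightarrow> complex" where
  "fourier f \<omega> = complex_of_real ((2 * pi) powr (- real DIM('a) / 2)) *
     (LINT x|lborel. complex_of_real (f x) * cis (- inner x \<omega>))"

definition correlation_function :: "('a::euclidean_space \<Rightarrow> real) \<Rightarrow> bool" where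
  "correlation_function \<Psi> \<longleftrightarrow> continuous_on UNIV \<Psi> \<and> \<Psi> 0 = 1 \<and> (\<forall>h. \<Psi> (- h) = \<Psi> h) \<and>
     (\<forall>n (xs :: nat \<Rightarrow> 'a) (c :: nat \<Rightarrow> real).
        (\<Sum>j<n. \<Sum>k<n. c j * c k * \<Psi> (xs j - xs k)) \<ge> 0)"

definition positive_definite_fun :: "('a::euclidean_space \<Rightarrow> real) \<Rightarrow> bool" where
  "positive_definite_fun \<Psi> \<longleftrightarrow>
     (\<forall>n (xs :: nat \<Rightarrow> 'a) (c :: nat \<Rightarrow> real).
        (\<forall>j<n. \<forall>k<n. j \<noteq> k \<longrightarrow> xs j \<noteq> xs k) \<and> (\<exists>j<n. c j \<noteq> 0) \<longrightarrow>
        (\<Sum>j<n. \<Sum>k<n. c j * c k * \<Psi> (xs j - xs k)) > 0)"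

definition L2_onb :: "'a::euclidean_space set \<Rightarrow> (nat \<Rightarrow> 'a \<Rightarrow> real) \<Rightarrow> bool" where
  "L2_onb \<Omega> \<phi> \<longleftrightarrow>
     (\<forall>k. \<phi> k \<in> borel_measurable (lebesgue_on \<Omega>) \<and>
          integrable (lebesgue_on \<Omega>) (\<lambda>x. (\<phi> k x)\<^sup>2)) \<and>
     (\<forall>j k. (LINT x|lebesgue_on \<Omega>. \<phi> j x * \<phi> k x) = (if j = k then 1 else 0)) \<and>
     (\<forall>f. f \<in> borel_measurable (lebesgue_on \<Omega>) \<and> integrable (lebesgue_on \<Omega>) (\<lambda>x. (f x)\<^sup>2) \<and>
          (\<forall>k. (LINT x|lebesgue_on \<Omega>. f x * \<phi> k x) = 0)
          \<longrightarrow> (AE x in lebesgue_on \<Omega>. f x = 0))"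

definition kmat :: "('a::euclidean_space \<Rightarrow> real) \<Rightarrow> nat \<Rightarrow> (nat \<Rightarrow> 'a) \<Rightarrow> real mat" where
  "kmat \<Psi> n xs = mat n n (\<lambda>(j, k). \<Psi> (xs j - xs k))"

definition kvec :: "('a::euclidean_space \<Rightarrow> real) \<Rightarrow> nat \<Rightarrow> (nat \<Rightarrow> 'a) \<Rightarrow> 'a \<Rightarrow> real vec" where
  "kvec \<Psi> n xs x = vec n (\<lambda>j. \<Psi> (x - xs j))"

definition post_var_factor ::
    "('a::euclidean_space \<Rightarrow> real) \<Rightarrow> real \<Rightarrow> nat \<Rightarrow> (nat \<Rightarrow> 'a) \<Rightarrow> 'a \<Rightarrow> real" where
  "post_var_factor \<Psi> \<mu> n xs x =
     \<Psi> (x - x) - scalar_prod (kvec \<Psi> n xs x)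
        (the (mat_inverse (kmat \<Psi> n xs + \<mu> \<cdot>\<^sub>m 1\<^sub>m n)) *\<^sub>v kvec \<Psi> n xs x)"

definition cond_var ::
    "real \<Rightarrow> ('a::euclidean_space \<Rightarrow> real) \<Rightarrow> real \<Rightarrow> nat \<Rightarrow> (nat \<Rightarrow> 'a) \<Rightarrow> 'a \<Rightarrow> real" where
  "cond_var \<sigma> \<Psi> \<mu> n xs x = \<sigma>\<^sup>2 * post_var_factor \<Psi> \<mu> n xs x"

end

theory Submission
  imports Defs "Jordan_Normal_Form.Determinant" "HOL-Probability.Characteristic_Functions"
begin

lemma corr_psd:
  fixes c :: "nat \<Rightarrow> real" and xs :: "nat \<Rightarrow> 'a::euclidean_space"
  assumes "correlation_function \<Phi>"
  shows "(\<Sum>j<n. \<Sum>k<n. c j * c k * \<Phi> (xs j - xs k)) \<ge> 0"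
  using assms unfolding correlation_function_def by blast

lemma kmat_carrier: "kmat \<Phi> n xs + \<mu> \<cdot>\<^sub>m 1\<^sub>m n \<in> carrier_mat n n"
  unfolding kmat_def by auto

lemma M_entry: "i < n \<Longrightarrow> k < n \<Longrightarrow> (kmat \<Phi> n xs + \<mu> \<cdot>\<^sub>m 1\<^sub>m n) $$ (i,k) = \<Phi> (xs i - xs k) + (if i = k then \<mu> else 0)"
  unfolding kmat_def by auto

lemma M_mult_vec:
  assumes "v \<in> carrier_vec n" "i < n"
  shows "((kmat \<Phi> n xs + \<mu> \<cdot>\<^sub>m 1\<^sub>m n) *\<^sub>v v) $ i = (\<Sum>k<n. \<Phi> (xs i - xs k) * v $ k) + \<mu> * v $ i"
proof -
  have "((kmat \<Phi> n xs + \<mu> \<cdot>\<^sub>m 1\<^sub>m n) *\<^sub>v v) $ i = (\<Sum>k<n. (\<Phi> (xs i - xs k) + (if i = k then \<mu> else 0)) * v $ k)"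
    using assms unfolding mult_mat_vec_def scalar_prod_def
    by (auto simp: kmat_def atLeast0LessThan intro!: sum.cong)
  also have "\<dots> = (\<Sum>k<n. \<Phi> (xs i - xs k) * v $ k) + (\<Sum>k<n. (if i = k then \<mu> else 0) * v $ k)"
    by (simp add: distrib_right sum.distrib)
  also have "(\<Sum>k<n. (if i = k then \<mu> else 0) * v $ k) = (\<Sum>k<n. if i = k then \<mu> * v $ k else 0)"
    by (rule sum.cong) auto
  also have "\<dots> = \<mu> * v $ i"
    using assms(2) by simp
  finally show ?thesis .
qed

lemma M_det:
  assumes "correlation_function \<Phi>" "\<mu> > 0"
  shows "Determinant.det (kmat \<Phi> n xs + \<mu> \<cdot>\<^sub>m 1\<^sub>m n) \<noteq> 0"
proof
  let ?M = "kmat \<Phi> n xs + \<mu> \<cdot>\<^sub>m 1\<^sub>m n"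
  assume "Determinant.det ?M = 0"
  then obtain v where v: "v \<in> carrier_vec n" "v \<noteq> 0\<^sub>v n" "?M *\<^sub>v v = 0\<^sub>v n"
    using det_0_iff_vec_prod_zero_field[OF kmat_carrier] by blast
  have eq: "(\<Sum>k<n. \<Phi> (xs i - xs k) * v $ k) + \<mu> * v $ i = 0" if "i < n" for i
    using M_mult_vec[OF v(1) that, of \<Phi> xs \<mu>] v(3) that by simp
  obtain i where i: "i < n" "v $ i \<noteq> 0" using v(1,2) by (metis vec_eq_iff carrier_vecD index_zero_vec)
  have "0 = (\<Sum>j<n. v $ j * ((\<Sum>k<n. \<Phi> (xs j - xs k) * v $ k) + \<mu> * v $ j))"
    using eq by simp
  also have "\<dots> = (\<Sum>j<n. \<Sum>k<n. v $ j * v $ k * \<Phi> (xs j - xs k)) + \<mu> * (\<Sum>j<n. (v $ j)\<^sup>2)"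
    by (simp add: distrib_left sum.distrib sum_distrib_left sum_distrib_right power2_eq_square mult_ac)
  also have "\<dots> > 0"
  proof -
    have "(\<Sum>j<n. (v $ j)\<^sup>2) > 0"
      using i by (intro sum_pos2[of _ i]) auto
    then show ?thesis using corr_psd[OF assms(1), where n=n and c="\<lambda>j. v $ j" and xs=xs] assms(2)
      by (simp add: add_nonneg_pos)
  qed
  finally show False by simp
qed

lemma pvf_sum:
  assumes "correlation_function \<Phi>" "\<mu> > 0"
  shows "\<exists>u. (\<forall>i<n. (\<Sum>k<n. \<Phi> (xs i - xs k) * u k) + \<mu> * u i = \<Phi> (x - xs i)) \<and>
             post_var_factor \<Phi> \<mu> n xs x = \<Phi> 0 - (\<Sum>i<n. \<Phi> (x - xs i) * u i)"
proof -
  let ?M = "kmat \<Phi> n xs + \<mu> \<cdot>\<^sub>m 1\<^sub>m n"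
  let ?r = "kvec \<Phi> n xs x"
  have "?M \<in> Units (ring_mat TYPE(real) n ())"
    by (rule det_non_zero_imp_unit[OF kmat_carrier M_det[OF assms]])
  then obtain B where B: "mat_inverse ?M = Some B"
    using mat_inverse(1)[OF kmat_carrier, of \<Phi> n xs \<mu> "()"] by (cases "mat_inverse ?M") auto
  from mat_inverse(2)[OF kmat_carrier B] have MB: "?M * B = 1\<^sub>m n" and Bc: "B \<in> carrier_mat n n" by auto
  have rc: "?r \<in> carrier_vec n" by (simp add: kvec_def)
  define u where "u = B *\<^sub>v ?r"
  have uc: "u \<in> carrier_vec n" using Bc rc by (simp add: u_def)
  have Mu: "?M *\<^sub>v u = ?r"
    unfolding u_def using Bc rc MB
    by (metis assoc_mult_mat_vec kmat_carrier one_mult_mat_vec)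
  show ?thesis
  proof (intro exI[of _ "\<lambda>i. u $ i"] conjI allI impI)
    fix i assume i: "i < n"
    show "(\<Sum>k<n. \<Phi> (xs i - xs k) * u $ k) + \<mu> * u $ i = \<Phi> (x - xs i)"
      using M_mult_vec[OF uc i, of \<Phi> xs \<mu>] Mu i by (simp add: kvec_def)
  next
    show "post_var_factor \<Phi> \<mu> n xs x = \<Phi> 0 - (\<Sum>i<n. \<Phi> (x - xs i) * u $ i)"
      unfolding post_var_factor_def B option.sel u_def[symmetric]
      using uc by (simp add: scalar_prod_def kvec_def atLeast0LessThan)
  qed
qed

definition qf :: "('a::euclidean_space \<Rightarrow> real) \<Rightarrow> nat \<Rightarrow> (nat \<Rightarrow> 'a) \<Rightarrow> 'a \<Rightarrow> (nat \<Rightarrow> real) \<Rightarrow> real" where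
  "qf \<Phi> n xs x w = \<Phi> 0 - 2 * (\<Sum>i<n. w i * \<Phi> (x - xs i)) + (\<Sum>i<n. \<Sum>k<n. w i * w k * \<Phi> (xs i - xs k))"

lemma var_ineq:
  fixes \<Phi> :: "'a::euclidean_space \<Rightarrow> real"
  assumes sym: "\<And>h. \<Phi> (-h) = \<Phi> h"
    and psd: "\<And>c::nat\<Rightarrow>real. (\<Sum>j<n. \<Sum>k<n. c j * c k * \<Phi> (xs j - xs k)) \<ge> 0"
    and mu: "\<mu> \<ge> 0"
    and eq: "\<And>i. i < n \<Longrightarrow> (\<Sum>k<n. \<Phi> (xs i - xs k) * u k) + \<mu> * u i = \<Phi> (x - xs i)"
  shows "\<Phi> 0 - (\<Sum>i<n. \<Phi> (x - xs i) * u i) \<le> qf \<Phi> n xs x w + \<mu> * (\<Sum>i<n. (w i)\<^sup>2)"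
    and "\<Phi> 0 - (\<Sum>i<n. \<Phi> (x - xs i) * u i) = qf \<Phi> n xs x u + \<mu> * (\<Sum>i<n. (u i)\<^sup>2)"
proof -
  define B where "B a b = (\<Sum>i<n. \<Sum>k<n. a i * b k * \<Phi> (xs i - xs k))" for a b :: "nat \<Rightarrow> real"
  have Bsym: "B a b = B b a" for a b
  proof -
    have "B a b = (\<Sum>k<n. \<Sum>i<n. a i * b k * \<Phi> (xs i - xs k))"
      unfolding B_def by (rule sum.swap)
    also have "\<dots> = B b a" unfolding B_def
      by (intro sum.cong refl) (metis minus_diff_eq sym mult.commute)
    finally show ?thesis .
  qed
  have lin: "(\<Sum>i<n. a i * \<Phi> (x - xs i)) = B a u + \<mu> * (\<Sum>i<n. a i * u i)" for a
  proof -
    have "(\<Sum>i<n. a i * \<Phi> (x - xs i)) = (\<Sum>i<n. a i * ((\<Sum>k<n. \<Phi> (xs i - xs k) * u k) + \<mu> * u i))"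
      using eq by (intro sum.cong) auto
    also have "\<dots> = B a u + \<mu> * (\<Sum>i<n. a i * u i)"
      unfolding B_def by (simp add: distrib_left sum.distrib sum_distrib_left mult_ac)
    finally show ?thesis .
  qed
  have Bdd: "B (\<lambda>i. w i - u i) (\<lambda>i. w i - u i) = B w w - B w u - B u w + B u u"
    unfolding B_def by (simp add: algebra_simps sum_subtractf sum.distrib)
  have sq: "(\<Sum>i<n. (w i - u i)\<^sup>2) = (\<Sum>i<n. (w i)\<^sup>2) - 2 * (\<Sum>i<n. w i * u i) + (\<Sum>i<n. (u i)\<^sup>2)"
    by (simp add: power2_diff sum_subtractf sum.distrib sum_distrib_left mult_ac)
  have p1: "B (\<lambda>i. w i - u i) (\<lambda>i. w i - u i) \<ge> 0" using psd unfolding B_def .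
  have p2: "(\<Sum>i<n. (w i - u i)\<^sup>2) \<ge> 0" by (intro sum_nonneg) auto
  have ru: "(\<Sum>i<n. \<Phi> (x - xs i) * u i) = B u u + \<mu> * (\<Sum>i<n. (u i)\<^sup>2)"
    using lin[of u] by (simp add: mult.commute power2_eq_square)
  have qw: "qf \<Phi> n xs x w = \<Phi> 0 - 2 * (B w u + \<mu> * (\<Sum>i<n. w i * u i)) + B w w"
    unfolding qf_def lin B_def ..
  have qu: "qf \<Phi> n xs x u = \<Phi> 0 - 2 * (B u u + \<mu> * (\<Sum>i<n. (u i)\<^sup>2)) + B u u"
    unfolding qf_def lin B_def by (simp add: power2_eq_square)
  show "\<Phi> 0 - (\<Sum>i<n. \<Phi> (x - xs i) * u i) \<le> qf \<Phi> n xs x w + \<mu> * (\<Sum>i<n. (w i)\<^sup>2)"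
    using p1 p2 mu Bdd Bsym[of u w] sq unfolding ru qw
    by (smt (verit) mult_nonneg_nonneg distrib_left right_diff_distrib)
  show "\<Phi> 0 - (\<Sum>i<n. \<Phi> (x - xs i) * u i) = qf \<Phi> n xs x u + \<mu> * (\<Sum>i<n. (u i)\<^sup>2)"
    unfolding ru qu by simp
qed

lemma qf_quad:
  fixes \<Phi> :: "'a::euclidean_space \<Rightarrow> real"
  assumes sym: "\<And>h. \<Phi> (-h) = \<Phi> h"
  shows "qf \<Phi> n xs x w = (\<Sum>j<Suc n. \<Sum>k<Suc n.
     (if j = 0 then 1 else - w (j - 1)) * (if k = 0 then 1 else - w (k - 1)) *
     \<Phi> ((if j = 0 then x else xs (j - 1)) - (if k = 0 then x else xs (k - 1))))"
proof -
  have s: "\<Phi> (xs i - x) = \<Phi> (x - xs i)" for i by (metis minus_diff_eq sym)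
  show ?thesis
    unfolding qf_def sum.lessThan_Suc_shift
    by (simp add: s sum.distrib sum_distrib_left sum_negf algebra_simps sum_subtractf)
qed

lemma gauss_std:
  "(\<integral>s. cis (w * s) * complex_of_real (exp (- s\<^sup>2 / 2)) \<partial>lborel) = complex_of_real (sqrt (2 * pi) * exp (- w\<^sup>2 / 2))"
proof -
  have "char std_normal_distribution w = complex_of_real (exp (- w\<^sup>2 / 2))"
    by (simp add: char_std_normal_distribution)
  also have "char std_normal_distribution w = (\<integral>s. std_normal_density s *\<^sub>R iexp (w * s) \<partial>lborel)"
    unfolding char_def by (subst integral_density) auto
  also have "\<dots> = (\<integral>s. complex_of_real (1 / sqrt (2 * pi)) * (cis (w * s) * complex_of_real (exp (- s\<^sup>2 / 2))) \<partial>lborel)"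
    by (intro Bochner_Integration.integral_cong refl) (auto simp: std_normal_density_def scaleR_conv_of_real cis_conv_exp mult_ac)
  also have "\<dots> = complex_of_real (1 / sqrt (2 * pi)) * (\<integral>s. cis (w * s) * complex_of_real (exp (- s\<^sup>2 / 2)) \<partial>lborel)"
    by (rule integral_mult_right_zero)
  finally show ?thesis
    by (simp add: field_simps)
qed

lemma gauss_std_integrable:
  "integrable lborel (\<lambda>s. cis (w * s) * complex_of_real (exp (- s\<^sup>2 / 2)))"
proof -
  have "integrable lborel (\<lambda>s. complex_of_real (exp (- s\<^sup>2 / 2)))"
  proof -
    have "integrable lborel (\<lambda>s. sqrt (2 * pi) * std_normal_density s)" by auto
    then have "integrable lborel (\<lambda>s::real. exp (- s\<^sup>2 / 2))" by (simp add: std_normal_density_def)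
    then show ?thesis by simp
  qed
  then show ?thesis
    by (rule Bochner_Integration.integrable_bound) (auto simp: norm_mult intro!: borel_measurable_continuous_onI continuous_intros)
qed

lemma gauss1:
  fixes c :: real assumes c: "c > 0"
  shows "(\<integral>s. cis (v * s) * complex_of_real (exp (- (c * s)\<^sup>2 / 2)) \<partial>lborel) =
           complex_of_real (sqrt (2 * pi) / c * exp (- (v / c)\<^sup>2 / 2))"
    and "integrable lborel (\<lambda>s. cis (v * s) * complex_of_real (exp (- (c * s)\<^sup>2 / 2)))"
proof -
  let ?h = "\<lambda>s. cis (v * s) * complex_of_real (exp (- (c * s)\<^sup>2 / 2))"
  have eq: "?h (0 + (1/c) * r) = cis ((v / c) * r) * complex_of_real (exp (- r\<^sup>2 / 2))" for r
    using c by (simp add: field_simps)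
  have "(\<integral>s. ?h s \<partial>lborel) = \<bar>1/c\<bar> *\<^sub>R (\<integral>r. ?h (0 + (1/c) * r) \<partial>lborel)"
    using c by (intro lborel_integral_real_affine) simp
  also have "\<dots> = (1/c) *\<^sub>R complex_of_real (sqrt (2 * pi) * exp (- (v/c)\<^sup>2 / 2))"
    using c by (simp only: eq gauss_std) simp
  finally show "(\<integral>s. ?h s \<partial>lborel) = complex_of_real (sqrt (2 * pi) / c * exp (- (v / c)\<^sup>2 / 2))"
    by (simp add: scaleR_conv_of_real)
  have "integrable lborel (\<lambda>r. ?h (0 + (1/c) * r))"
    unfolding eq by (rule gauss_std_integrable)
  then show "integrable lborel ?h"
    using lborel_integrable_real_affine_iff[of "1/c" ?h 0] c by simp
qed

lemma inner_sum_basis: "b \<in> Basis \<Longrightarrow> (\<Sum>b'\<in>Basis. g b' *\<^sub>R b') \<bullet> (b :: 'a::euclidean_space) = g b"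
  by (simp add: inner_sum_left inner_Basis if_distrib sum.delta cong: if_cong)

lemma lborel_prod_int:
  fixes f :: "'a::euclidean_space \<Rightarrow> real \<Rightarrow> 'b::{real_normed_field,banach,second_countable_topology}"
  assumes f: "\<And>b. b \<in> Basis \<Longrightarrow> integrable lborel (f b)"
  shows "integrable lborel (\<lambda>x::'a. \<Prod>b\<in>Basis. f b (x \<bullet> b))"
    and "(\<integral>x. (\<Prod>b\<in>Basis. f b (x \<bullet> b)) \<partial>lborel) = (\<Prod>b\<in>Basis. \<integral>s. f b s \<partial>lborel)"
proof -
  interpret P: product_sigma_finite "\<lambda>_::'a. lborel :: real measure" by standard
  have fm[measurable]: "\<And>b. b \<in> Basis \<Longrightarrow> f b \<in> borel_measurable borel"
    using f[THEN borel_measurable_integrable] by simp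
  have Fm: "(\<lambda>x::'a. \<Prod>b\<in>Basis. f b (x \<bullet> b)) \<in> borel_measurable borel"
    by (intro borel_measurable_prod) (auto intro: measurable_compose[OF _ fm] borel_measurable_inner)
  have T[measurable]: "(\<lambda>g. \<Sum>b\<in>Basis. g b *\<^sub>R b) \<in> measurable (\<Pi>\<^sub>M b\<in>Basis. (lborel :: real measure)) (borel :: 'a measure)"
    by measurable
  have eqP: "(\<lambda>g. (\<Prod>b\<in>Basis. f b ((\<Sum>b'\<in>Basis. g b' *\<^sub>R b') \<bullet> b))) = (\<lambda>g. \<Prod>b\<in>Basis. f b (g b))"
    by (intro ext prod.cong refl) (simp add: inner_sum_basis)
  have I: "integrable (\<Pi>\<^sub>M b\<in>Basis. lborel) (\<lambda>g. \<Prod>b\<in>Basis. f b (g b))"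
    by (rule P.product_integrable_prod) (auto intro: f)
  show "integrable lborel (\<lambda>x::'a. \<Prod>b\<in>Basis. f b (x \<bullet> b))"
    apply (subst lborel_eq)
    apply (subst integrable_distr_eq[OF T Fm])
    using I by (simp add: eqP)
  show "(\<integral>x. (\<Prod>b\<in>Basis. f b (x \<bullet> b)) \<partial>lborel) = (\<Prod>b\<in>Basis. \<integral>s. f b s \<partial>lborel)"
    apply (subst lborel_eq)
    apply (subst integral_distr[OF T Fm])
    apply (simp add: eqP)
    by (rule P.product_integral_prod) (auto intro: f)
qed

definition W :: "real \<Rightarrow> 'a::euclidean_space \<Rightarrow> real" where
  "W c \<omega> = (\<Prod>b\<in>Basis. exp (- (c * (\<omega> \<bullet> b))\<^sup>2 / 2))"

definition E :: "'a::euclidean_space \<Rightarrow> real" where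
  "E u = (\<Prod>b\<in>Basis. sqrt (2 * pi) * exp (- (u \<bullet> b)\<^sup>2 / 2))"

lemma cis_prod: "finite A \<Longrightarrow> (\<Prod>i\<in>A. cis (f i)) = cis (\<Sum>i\<in>A. f i)"
  by (induction A rule: finite_induct) (auto simp: cis_mult)

lemma W_pos: "W c \<omega> > 0"
  unfolding W_def by (intro prod_pos) auto

lemma E_pos: "E u > 0"
  unfolding E_def by (intro prod_pos) auto

lemma W_integrable:
  assumes c: "c > 0" shows "integrable lborel (W c :: 'a::euclidean_space \<Rightarrow> real)"
proof -
  have "integrable lborel (\<lambda>s. cis (0 * s) * complex_of_real (exp (- (c * s)\<^sup>2 / 2)))"
    by (rule gauss1(2)[OF c])
  then have "integrable lborel (\<lambda>s. exp (- (c * s)\<^sup>2 / 2))"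
    by (simp add: complex_of_real_integrable_eq)
  then have "integrable lborel (\<lambda>x::'a. \<Prod>b\<in>Basis. (\<lambda>s. exp (- (c * s)\<^sup>2 / 2)) (x \<bullet> b))"
    by (intro lborel_prod_int(1))
  then show ?thesis unfolding W_def[abs_def] by simp
qed

lemma E_integral:
  shows "integrable lborel (E :: 'a::euclidean_space \<Rightarrow> real)"
    and "(\<integral>u. (E::'a \<Rightarrow> real) u \<partial>lborel) = (2 * pi) ^ DIM('a)"
proof -
  have i1: "integrable lborel (\<lambda>s. cis (0 * s) * complex_of_real (exp (- (1 * s)\<^sup>2 / 2)))"
    by (rule gauss1(2)) simp
  then have "integrable lborel (\<lambda>s::real. exp (- s\<^sup>2 / 2))"
    by (simp add: complex_of_real_integrable_eq)
  then have i2: "integrable lborel (\<lambda>s::real. sqrt (2 * pi) * exp (- s\<^sup>2 / 2))" by simp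
  have "(\<integral>s. cis (0 * s) * complex_of_real (exp (- s\<^sup>2 / 2)) \<partial>lborel) = complex_of_real (sqrt (2 * pi))"
    using gauss_std[of 0] by simp
  then have "complex_of_real (\<integral>s. exp (- s\<^sup>2 / 2) \<partial>lborel) = complex_of_real (sqrt (2 * pi))"
    by simp
  then have v: "(\<integral>s. exp (- s\<^sup>2 / 2) \<partial>lborel) = sqrt (2 * pi)"
    using of_real_eq_iff by blast
  have "integrable lborel (\<lambda>x::'a. \<Prod>b\<in>Basis. (\<lambda>s. sqrt (2 * pi) * exp (- s\<^sup>2 / 2)) (x \<bullet> b))"
    using i2 by (intro lborel_prod_int(1))
  then show "integrable lborel (E :: 'a \<Rightarrow> real)" unfolding E_def[abs_def] by simp
  have "(\<integral>x. (\<Prod>b\<in>(Basis::'a set). (\<lambda>s. sqrt (2 * pi) * exp (- s\<^sup>2 / 2)) (x \<bullet> b)) \<partial>lborel)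
      = (\<Prod>b\<in>(Basis::'a set). \<integral>s. sqrt (2 * pi) * exp (- s\<^sup>2 / 2) \<partial>lborel)"
    using i2 by (intro lborel_prod_int(2))
  also have "\<dots> = (\<Prod>b\<in>(Basis::'a set). sqrt (2 * pi) * sqrt (2 * pi))"
    using v by simp
  also have "\<dots> = (\<Prod>b\<in>(Basis::'a set). 2 * pi)"
    by simp
  finally show "(\<integral>u. (E::'a \<Rightarrow> real) u \<partial>lborel) = (2 * pi) ^ DIM('a)"
    unfolding E_def[abs_def] by simp
qed

lemma W_cos:
  fixes v :: "'a::euclidean_space"
  assumes c: "c > 0"
  shows "integrable lborel (\<lambda>\<omega>. cos (v \<bullet> \<omega>) * W c \<omega>)"
    and "(\<integral>\<omega>. cos (v \<bullet> \<omega>) * W c \<omega> \<partial>lborel) = (1 / c) ^ DIM('a) * E (v /\<^sub>R c)"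
proof -
  let ?f = "\<lambda>b s. cis ((v \<bullet> b) * s) * complex_of_real (exp (- (c * s)\<^sup>2 / 2))"
  have fi: "integrable lborel (?f b)" for b by (rule gauss1(2)[OF c])
  have eq: "(\<Prod>b\<in>Basis. ?f b (\<omega> \<bullet> b)) = cis (v \<bullet> \<omega>) * complex_of_real (W c \<omega>)" for \<omega>
  proof -
    have "(\<Prod>b\<in>Basis. ?f b (\<omega> \<bullet> b)) = (\<Prod>b\<in>Basis. cis ((v \<bullet> b) * (\<omega> \<bullet> b))) * (\<Prod>b\<in>Basis. complex_of_real (exp (- (c * (\<omega> \<bullet> b))\<^sup>2 / 2)))"
      by (rule prod.distrib)
    also have "(\<Prod>b\<in>Basis. cis ((v \<bullet> b) * (\<omega> \<bullet> b))) = cis (v \<bullet> \<omega>)"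
      by (simp only: cis_prod[OF finite_Basis] euclidean_inner[of v \<omega>])
    finally show ?thesis by (simp add: W_def)
  qed
  have I: "integrable lborel (\<lambda>\<omega>::'a. cis (v \<bullet> \<omega>) * complex_of_real (W c \<omega>))"
    using lborel_prod_int(1)[of ?f, OF fi] unfolding eq .
  have Reeq: "Re (cis (v \<bullet> \<omega>) * complex_of_real (W c \<omega>)) = cos (v \<bullet> \<omega>) * W c \<omega>" for \<omega>
    by simp
  show "integrable lborel (\<lambda>\<omega>. cos (v \<bullet> \<omega>) * W c \<omega>)"
    using integrable_Re[OF I] unfolding Reeq .
  have "(\<integral>\<omega>. cos (v \<bullet> \<omega>) * W c \<omega> \<partial>lborel) = Re (\<integral>\<omega>. cis (v \<bullet> \<omega>) * complex_of_real (W c \<omega>) \<partial>lborel)"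
    using integral_Re[OF I] unfolding Reeq by simp
  also have "(\<integral>\<omega>. cis (v \<bullet> \<omega>) * complex_of_real (W c \<omega>) \<partial>lborel) = (\<Prod>b\<in>(Basis::'a set). \<integral>s. ?f b s \<partial>lborel)"
    using lborel_prod_int(2)[of ?f, OF fi] unfolding eq .
  also have "\<dots> = (\<Prod>b\<in>(Basis::'a set). complex_of_real (sqrt (2 * pi) / c * exp (- ((v \<bullet> b) / c)\<^sup>2 / 2)))"
    by (simp only: gauss1(1)[OF c])
  also have "Re \<dots> = (\<Prod>b\<in>(Basis::'a set). 1 / c * (sqrt (2 * pi) * exp (- ((v /\<^sub>R c) \<bullet> b)\<^sup>2 / 2)))"
    unfolding of_real_prod[symmetric] Re_complex_of_real
    by (intro prod.cong refl) (simp add: field_simps)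
  also have "\<dots> = (1 / c) ^ DIM('a) * E (v /\<^sub>R c)"
    unfolding E_def prod.distrib by simp
  finally show "(\<integral>\<omega>. cos (v \<bullet> \<omega>) * W c \<omega> \<partial>lborel) = (1 / c) ^ DIM('a) * E (v /\<^sub>R c)" .
qed

lemma W_cont: "continuous_on UNIV (W c :: 'a::euclidean_space \<Rightarrow> real)"
  unfolding W_def[abs_def] by (intro continuous_intros) auto

lemma E_cont: "continuous_on UNIV (E :: 'a::euclidean_space \<Rightarrow> real)"
  unfolding E_def[abs_def] by (intro continuous_intros) auto

lemma E_le: "E (u :: 'a::euclidean_space) \<le> sqrt (2 * pi) ^ DIM('a)"
proof -
  have "E u \<le> (\<Prod>b\<in>(Basis::'a set). sqrt (2 * pi))"
    unfolding E_def by (intro prod_mono) auto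
  then show ?thesis by simp
qed

lemma lborel_integral_affine_eucl:
  fixes f :: "'a::euclidean_space \<Rightarrow> real"
  assumes c: "c > 0" and f[measurable]: "f \<in> borel_measurable borel"
  shows "(\<integral>x. f x \<partial>lborel) = c ^ DIM('a) * (\<integral>u. f (t + c *\<^sub>R u) \<partial>lborel)"
proof -
  let ?T = "\<lambda>x::'a. t + c *\<^sub>R x"
  have Tm[measurable]: "?T \<in> measurable borel borel" by measurable
  have L: "lborel = density (distr lborel borel ?T) (\<lambda>_. ennreal (c ^ DIM('a)))"
    using lborel_affine[of c t] c by simp
  have "(\<integral>x. f x \<partial>lborel) = (\<integral>x. f x \<partial>density (distr lborel borel ?T) (\<lambda>_. ennreal (c ^ DIM('a))))"
    by (rule arg_cong[where f="\<lambda>M. integral\<^sup>L M f", OF L])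
  also have "\<dots> = (\<integral>x. c ^ DIM('a) *\<^sub>R f x \<partial>distr lborel borel ?T)"
    using c by (subst integral_density) auto
  also have "\<dots> = (\<integral>u. c ^ DIM('a) *\<^sub>R f (?T u) \<partial>lborel)"
    by (subst integral_distr) auto
  also have "\<dots> = c ^ DIM('a) * (\<integral>u. f (t + c *\<^sub>R u) \<partial>lborel)"
    by simp
  finally show ?thesis .
qed

lemma approx_id:
  fixes G :: "'a::euclidean_space \<Rightarrow> real"
  assumes Gc: "continuous_on UNIV G" and Gb: "\<And>x. \<bar>G x\<bar> \<le> B"
  shows "(\<lambda>N. \<integral>u. G (z + inverse (real (Suc N)) *\<^sub>R u) * E u \<partial>lborel) \<longlonglongrightarrow> G z * (2 * pi) ^ DIM('a)"
proof -
  have Gm[measurable]: "G \<in> borel_measurable borel" using Gc by (rule borel_measurable_continuous_onI)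
  have Em[measurable]: "(E :: 'a \<Rightarrow> real) \<in> borel_measurable borel" using E_cont by (rule borel_measurable_continuous_onI)
  have "(\<lambda>N. \<integral>u. G (z + inverse (real (Suc N)) *\<^sub>R u) * E u \<partial>lborel) \<longlonglongrightarrow> (\<integral>u. G z * E (u::'a) \<partial>lborel)"
  proof (rule integral_dominated_convergence[where w="\<lambda>u. B * E u" and M=lborel and f="\<lambda>u. G z * E (u::'a)" and s="\<lambda>N u. G (z + inverse (real (Suc N)) *\<^sub>R u) * E u"])
    show "(\<lambda>u. G z * E (u::'a)) \<in> borel_measurable lborel" by simp
    show "(\<lambda>u. G (z + inverse (real (Suc N)) *\<^sub>R u) * E u) \<in> borel_measurable lborel" for N
      by simp
    show "integrable lborel (\<lambda>u. B * (E :: 'a \<Rightarrow> real) u)"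
      by (rule integrable_mult_right) (rule E_integral(1))
    show "AE u in lborel. (\<lambda>N. G (z + inverse (real (Suc N)) *\<^sub>R u) * E u) \<longlonglongrightarrow> G z * E u"
    proof (rule AE_I2)
      fix u :: 'a
      have "(\<lambda>N. z + inverse (real (Suc N)) *\<^sub>R u) \<longlonglongrightarrow> z + 0 *\<^sub>R u"
        by (intro tendsto_intros LIMSEQ_inverse_real_of_nat)
      then have "(\<lambda>N. G (z + inverse (real (Suc N)) *\<^sub>R u)) \<longlonglongrightarrow> G z"
        using Gc by (auto intro: isCont_tendsto_compose simp: continuous_on_eq_continuous_at)
      then show "(\<lambda>N. G (z + inverse (real (Suc N)) *\<^sub>R u) * E u) \<longlonglongrightarrow> G z * E u"
        by (intro tendsto_intros)
    qed
    show "AE u in lborel. norm (G (z + inverse (real (Suc N)) *\<^sub>R u) * E u) \<le> B * E u" for N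
    proof (rule AE_I2)
      fix u :: 'a
      have "\<bar>G (z + inverse (real (Suc N)) *\<^sub>R u)\<bar> * E u \<le> B * E u"
        using Gb E_pos[of u] by (intro mult_right_mono) (auto simp: less_imp_le)
      then show "norm (G (z + inverse (real (Suc N)) *\<^sub>R u) * E u) \<le> B * E u"
        using E_pos[of u] by (simp add: abs_mult)
    qed
  qed
  also have "(\<integral>u. G z * E (u::'a) \<partial>lborel) = G z * (2 * pi) ^ DIM('a)"
    using E_integral(2)[where 'a='a] by simp
  finally show ?thesis .
qed

lemma L_formula:
  fixes G :: "'a::euclidean_space \<Rightarrow> real"
  assumes Gi: "integrable lborel G" and Gc: "continuous_on UNIV G" and c: "c > 0"
  shows "integrable lborel (\<lambda>\<omega>. (\<integral>x. G x * cos (x \<bullet> \<omega>) \<partial>lborel) * (cos (z \<bullet> \<omega>) * W c \<omega>))"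
    and "(\<integral>\<omega>. (\<integral>x. G x * cos (x \<bullet> \<omega>) \<partial>lborel) * (cos (z \<bullet> \<omega>) * W c \<omega>) \<partial>lborel) =
           ((\<integral>u. G (z + c *\<^sub>R u) * E u \<partial>lborel) + (\<integral>u. G (- z + c *\<^sub>R u) * E u \<partial>lborel)) / 2"
proof -
  have Gm[measurable]: "G \<in> borel_measurable borel" using Gc by (rule borel_measurable_continuous_onI)
  have Wm[measurable]: "(W c :: 'a \<Rightarrow> real) \<in> borel_measurable borel" using W_cont by (rule borel_measurable_continuous_onI)
  have Em[measurable]: "(E :: 'a \<Rightarrow> real) \<in> borel_measurable borel" using E_cont by (rule borel_measurable_continuous_onI)
  define F where "F x \<omega> = (G x * cos (x \<bullet> \<omega>)) * (cos (z \<bullet> \<omega>) * W c \<omega>)" for x \<omega> :: 'a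
  have mF: "case_prod F \<in> borel_measurable (lborel \<Otimes>\<^sub>M lborel)"
    unfolding F_def by measurable
  define IW where "IW = (\<integral>\<omega>. W c \<omega> \<partial>(lborel :: 'a measure))"
  have Hint: "integrable (lborel \<Otimes>\<^sub>M lborel) (\<lambda>(x::'a, \<omega>::'a). \<bar>G x\<bar> * W c \<omega>)"
  proof (rule lborel_pair.Fubini_integrable)
    show "(\<lambda>(x::'a, \<omega>::'a). \<bar>G x\<bar> * W c \<omega>) \<in> borel_measurable (lborel \<Otimes>\<^sub>M lborel)" by measurable
    have "(\<lambda>x. \<integral>\<omega>. norm (case (x, \<omega>::'a) of (x, \<omega>) \<Rightarrow> \<bar>G x\<bar> * W c \<omega>) \<partial>lborel) = (\<lambda>x. \<bar>G x\<bar> * IW)"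
      by (auto simp: IW_def abs_mult abs_of_pos[OF W_pos])
    moreover have "integrable lborel (\<lambda>x. \<bar>G x\<bar> * IW)"
      using Gi by (intro integrable_mult_left integrable_abs)
    ultimately show "integrable lborel (\<lambda>x. \<integral>\<omega>. norm (case (x, \<omega>::'a) of (x, \<omega>) \<Rightarrow> \<bar>G x\<bar> * W c \<omega>) \<partial>lborel)"
      by simp
    show "AE x in lborel. integrable lborel (\<lambda>\<omega>. case (x, \<omega>::'a) of (x, \<omega>) \<Rightarrow> \<bar>G x\<bar> * W c \<omega>)"
      using W_integrable[OF c] by (auto intro!: integrable_mult_right)
  qed
  have Fint: "integrable (lborel \<Otimes>\<^sub>M lborel) (case_prod F)"
  proof (rule Bochner_Integration.integrable_bound[OF Hint mF])
    show "AE p in lborel \<Otimes>\<^sub>M lborel. norm (case_prod F p) \<le> norm (case p of (x, \<omega>) \<Rightarrow> \<bar>G x\<bar> * W c \<omega>)"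
    proof (rule AE_I2, clarify)
      fix x \<omega> :: 'a
      have "\<bar>G x * cos (x \<bullet> \<omega>) * (cos (z \<bullet> \<omega>) * W c \<omega>)\<bar> = \<bar>G x\<bar> * \<bar>cos (x \<bullet> \<omega>)\<bar> * \<bar>cos (z \<bullet> \<omega>)\<bar> * W c \<omega>"
        using W_pos[of c \<omega>] by (simp add: abs_mult)
      also have "\<dots> \<le> \<bar>G x\<bar> * 1 * 1 * W c \<omega>"
        using W_pos[of c \<omega>] by (intro mult_right_mono mult_mono) auto
      finally show "norm (F x \<omega>) \<le> norm (\<bar>G x\<bar> * W c \<omega>)"
        using W_pos[of c \<omega>] by (simp add: F_def abs_mult)
    qed
  qed
  have inner1: "(\<integral>x. F x \<omega> \<partial>lborel) = (\<integral>x. G x * cos (x \<bullet> \<omega>) \<partial>lborel) * (cos (z \<bullet> \<omega>) * W c \<omega>)" for \<omega>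
    unfolding F_def by (rule integral_mult_left_zero)
  show "integrable lborel (\<lambda>\<omega>. (\<integral>x. G x * cos (x \<bullet> \<omega>) \<partial>lborel) * (cos (z \<bullet> \<omega>) * W c \<omega>))"
    using lborel_pair.integrable_snd[OF Fint] unfolding inner1 .
  let ?a = "(1 / c) ^ DIM('a)"
  have inner2: "(\<integral>\<omega>. F x \<omega> \<partial>lborel) = G x * ((?a * E ((x - z) /\<^sub>R c) + ?a * E ((x + z) /\<^sub>R c)) / 2)" for x
  proof -
    have cc: "cos (x \<bullet> \<omega>) * (cos (z \<bullet> \<omega>) * W c \<omega>) = (cos ((x - z) \<bullet> \<omega>) * W c \<omega> + cos ((x + z) \<bullet> \<omega>) * W c \<omega>) / 2" for \<omega>
      using cos_times_cos[of "x \<bullet> \<omega>" "z \<bullet> \<omega>"] by (simp add: inner_diff_left inner_add_left field_simps)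
         (metis distrib_left mult.left_commute)
    have "(\<integral>\<omega>. F x \<omega> \<partial>lborel) = G x * (\<integral>\<omega>. cos (x \<bullet> \<omega>) * (cos (z \<bullet> \<omega>) * W c \<omega>) \<partial>lborel)"
      unfolding F_def mult.assoc by (rule integral_mult_right_zero)
    also have "(\<integral>\<omega>. cos (x \<bullet> \<omega>) * (cos (z \<bullet> \<omega>) * W c \<omega>) \<partial>lborel) =
        ((\<integral>\<omega>. cos ((x - z) \<bullet> \<omega>) * W c \<omega> \<partial>lborel) + (\<integral>\<omega>. cos ((x + z) \<bullet> \<omega>) * W c \<omega> \<partial>lborel)) / 2"
      unfolding cc using W_cos(1)[OF c, of "x - z"] W_cos(1)[OF c, of "x + z"] by simp
    also have "\<dots> = (?a * E ((x - z) /\<^sub>R c) + ?a * E ((x + z) /\<^sub>R c)) / 2"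
      by (simp only: W_cos(2)[OF c])
    finally show ?thesis .
  qed
  have Emax: "\<And>u::'a. \<bar>E u\<bar> \<le> sqrt (2 * pi) ^ DIM('a)"
    by (metis E_le E_pos abs_of_pos)
  have intGE: "integrable lborel (\<lambda>x. G x * E ((x + t) /\<^sub>R c))" for t :: 'a
  proof (rule Bochner_Integration.integrable_bound[where f="\<lambda>x. G x * sqrt (2 * pi) ^ DIM('a)"])
    show "integrable lborel (\<lambda>x. G x * sqrt (2 * pi) ^ DIM('a))" using Gi by (rule integrable_mult_left)
    show "(\<lambda>x. G x * E ((x + t) /\<^sub>R c)) \<in> borel_measurable lborel" by measurable
    show "AE x in lborel. norm (G x * E ((x + t) /\<^sub>R c)) \<le> norm (G x * sqrt (2 * pi) ^ DIM('a))"
      using Emax by (auto simp: abs_mult intro!: mult_left_mono)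
  qed
  have sub: "(\<integral>x. G x * E ((x + t) /\<^sub>R c) \<partial>lborel) = c ^ DIM('a) * (\<integral>u. G (- t + c *\<^sub>R u) * E u \<partial>lborel)" for t :: 'a
  proof -
    have "(\<integral>x. G x * E ((x + t) /\<^sub>R c) \<partial>lborel) = c ^ DIM('a) * (\<integral>u. G (- t + c *\<^sub>R u) * E ((- t + c *\<^sub>R u + t) /\<^sub>R c) \<partial>lborel)"
      using c by (intro lborel_integral_affine_eucl) auto
    also have "(\<lambda>u. G (- t + c *\<^sub>R u) * E ((- t + c *\<^sub>R u + t) /\<^sub>R c)) = (\<lambda>u. G (- t + c *\<^sub>R u) * E u)"
      using c by (intro ext) simp
    finally show ?thesis .
  qed
  have "(\<integral>\<omega>. (\<integral>x. G x * cos (x \<bullet> \<omega>) \<partial>lborel) * (cos (z \<bullet> \<omega>) * W c \<omega>) \<partial>lborel) = (\<integral>\<omega>. (\<integral>x. F x \<omega> \<partial>lborel) \<partial>lborel)"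
    unfolding inner1 ..
  also have "\<dots> = (\<integral>x. (\<integral>\<omega>. F x \<omega> \<partial>lborel) \<partial>lborel)"
    by (rule lborel_pair.Fubini_integral[OF Fint])
  also have "\<dots> = (\<integral>x. ?a / 2 * (G x * E ((x + - z) /\<^sub>R c)) + ?a / 2 * (G x * E ((x + z) /\<^sub>R c)) \<partial>lborel)"
    unfolding inner2 by (intro Bochner_Integration.integral_cong refl) (simp add: algebra_simps)
  also have "\<dots> = ?a / 2 * (\<integral>x. G x * E ((x + - z) /\<^sub>R c) \<partial>lborel) + ?a / 2 * (\<integral>x. G x * E ((x + z) /\<^sub>R c) \<partial>lborel)"
    using intGE[of "- z"] intGE[of z] by simp
  also have "\<dots> = ?a / 2 * (c ^ DIM('a) * (\<integral>u. G (z + c *\<^sub>R u) * E u \<partial>lborel)) + ?a / 2 * (c ^ DIM('a) * (\<integral>u. G (- z + c *\<^sub>R u) * E u \<partial>lborel))"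
    unfolding sub by simp
  also have "\<dots> = ((\<integral>u. G (z + c *\<^sub>R u) * E u \<partial>lborel) + (\<integral>u. G (- z + c *\<^sub>R u) * E u \<partial>lborel)) / 2"
    using c by (simp add: field_simps power_one_over)
  finally show "(\<integral>\<omega>. (\<integral>x. G x * cos (x \<bullet> \<omega>) \<partial>lborel) * (cos (z \<bullet> \<omega>) * W c \<omega>) \<partial>lborel) =
           ((\<integral>u. G (z + c *\<^sub>R u) * E u \<partial>lborel) + (\<integral>u. G (- z + c *\<^sub>R u) * E u \<partial>lborel)) / 2" .
qed

lemma cos_quad_nonneg:
  fixes p :: "nat \<Rightarrow> 'a::euclidean_space" and a :: "nat \<Rightarrow> real" and n :: nat
  shows "(\<Sum>j<n. \<Sum>k<n. a j * a k * cos ((p j - p k) \<bullet> \<omega>)) \<ge> 0"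
proof -
  have "(\<Sum>j<n. \<Sum>k<n. a j * a k * cos ((p j - p k) \<bullet> \<omega>)) =
        (\<Sum>j<n. \<Sum>k<n. (a j * cos (p j \<bullet> \<omega>)) * (a k * cos (p k \<bullet> \<omega>)) + (a j * sin (p j \<bullet> \<omega>)) * (a k * sin (p k \<bullet> \<omega>)))"
    by (intro sum.cong refl) (simp add: inner_diff_left cos_diff algebra_simps)
  also have "\<dots> = (\<Sum>j<n. a j * cos (p j \<bullet> \<omega>))\<^sup>2 + (\<Sum>j<n. a j * sin (p j \<bullet> \<omega>))\<^sup>2"
    by (simp add: power2_eq_square sum_product sum.distrib)
  also have "\<dots> \<ge> 0" by simp
  finally show ?thesis .
qed

lemma psd_from_spectrum:
  fixes G :: "'a::euclidean_space \<Rightarrow> real" and p :: "nat \<Rightarrow> 'a" and a :: "nat \<Rightarrow> real" and n :: nat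
  assumes Gi: "integrable lborel G" and Gc: "continuous_on UNIV G" and Gb: "\<And>x. \<bar>G x\<bar> \<le> B"
    and Gsym: "\<And>x. G (- x) = G x"
    and Gs: "\<And>\<omega>. (\<integral>x. G x * cos (x \<bullet> \<omega>) \<partial>lborel) \<ge> 0"
  shows "(\<Sum>j<n. \<Sum>k<n. a j * a k * G (p j - p k)) \<ge> 0"
proof -
  define S where "S \<omega> = (\<integral>x. G x * cos (x \<bullet> \<omega>) \<partial>lborel)" for \<omega> :: 'a
  define cN where "cN N = inverse (real (Suc N))" for N
  have cpos: "cN N > 0" for N by (simp add: cN_def)
  define L where "L N z = (\<integral>\<omega>. S \<omega> * (cos (z \<bullet> \<omega>) * W (cN N) \<omega>) \<partial>lborel)" for N z
  have Lint: "integrable lborel (\<lambda>\<omega>. S \<omega> * (cos (z \<bullet> \<omega>) * W (cN N) \<omega>))" for N z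
    unfolding S_def by (rule L_formula(1)[OF Gi Gc cpos])
  have Lval: "L N z = ((\<integral>u. G (z + cN N *\<^sub>R u) * E u \<partial>lborel) + (\<integral>u. G (- z + cN N *\<^sub>R u) * E u \<partial>lborel)) / 2" for N z
    unfolding L_def S_def by (rule L_formula(2)[OF Gi Gc cpos])
  have pos: "(\<Sum>j<n. \<Sum>k<n. a j * a k * L N (p j - p k)) \<ge> 0" for N
  proof -
    have "(\<Sum>j<n. \<Sum>k<n. a j * a k * L N (p j - p k)) =
          (\<integral>\<omega>. (\<Sum>j<n. \<Sum>k<n. a j * a k * (S \<omega> * (cos ((p j - p k) \<bullet> \<omega>) * W (cN N) \<omega>))) \<partial>lborel)"
      unfolding L_def using Lint by (simp add: integral_sum integrable_sum)
    also have "\<dots> \<ge> 0"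
    proof (rule integral_nonneg_AE, rule AE_I2)
      fix \<omega> :: 'a
      have "(\<Sum>j<n. \<Sum>k<n. a j * a k * (S \<omega> * (cos ((p j - p k) \<bullet> \<omega>) * W (cN N) \<omega>))) =
            (S \<omega> * W (cN N) \<omega>) * (\<Sum>j<n. \<Sum>k<n. a j * a k * cos ((p j - p k) \<bullet> \<omega>))"
        by (simp add: sum_distrib_left mult_ac)
      also have "\<dots> \<ge> 0"
        using Gs[of \<omega>] W_pos[of "cN N" \<omega>] cos_quad_nonneg[where n=n and a=a and p=p and \<omega>=\<omega>]
        by (intro mult_nonneg_nonneg) (auto simp: S_def less_imp_le)
      finally show "0 \<le> (\<Sum>j<n. \<Sum>k<n. a j * a k * (S \<omega> * (cos ((p j - p k) \<bullet> \<omega>) * W (cN N) \<omega>)))" .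
    qed
    finally show ?thesis .
  qed
  have lim: "(\<lambda>N. L N z) \<longlonglongrightarrow> G z * (2 * pi) ^ DIM('a)" for z
  proof -
    have "(\<lambda>N. ((\<integral>u. G (z + cN N *\<^sub>R u) * E u \<partial>lborel) + (\<integral>u. G (- z + cN N *\<^sub>R u) * E u \<partial>lborel)) / 2)
          \<longlonglongrightarrow> (G z * (2 * pi) ^ DIM('a) + G (- z) * (2 * pi) ^ DIM('a)) / 2"
      unfolding cN_def by (intro tendsto_intros approx_id[OF Gc Gb]) simp
    then show ?thesis unfolding Lval using Gsym[of z] by (simp add: mult.commute)
  qed
  have "(\<lambda>N. \<Sum>j<n. \<Sum>k<n. a j * a k * L N (p j - p k)) \<longlonglongrightarrow>
        (\<Sum>j<n. \<Sum>k<n. a j * a k * (G (p j - p k) * (2 * pi) ^ DIM('a)))"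
    by (intro tendsto_intros lim)
  then have "0 \<le> (\<Sum>j<n. \<Sum>k<n. a j * a k * (G (p j - p k) * (2 * pi) ^ DIM('a)))"
    using pos by (intro LIMSEQ_le_const[of _ _ 0]) auto
  also have "\<dots> = (2 * pi) ^ DIM('a) * (\<Sum>j<n. \<Sum>k<n. a j * a k * G (p j - p k))"
    by (simp add: sum_distrib_left mult_ac)
  finally have "0 \<le> (2 * pi) ^ DIM('a) * (\<Sum>j<n. \<Sum>k<n. a j * a k * G (p j - p k))" .
  moreover have "(2 * pi :: real) ^ DIM('a) > 0" by simp
  ultimately have a: "(2 * pi :: real) ^ DIM('a) > 0"
    and "(2 * pi) ^ DIM('a) * 0 \<le> (2 * pi) ^ DIM('a) * (\<Sum>j<n. \<Sum>k<n. a j * a k * G (p j - p k))"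
    by (simp_all only: mult_zero_right)
  from this(2) show ?thesis by (rule iffD1[OF mult_le_cancel_left_pos[OF a]])
qed

lemma corr_bound:
  fixes \<Psi> :: "'a::euclidean_space \<Rightarrow> real"
  assumes "correlation_function \<Psi>"
  shows "\<bar>\<Psi> x\<bar> \<le> 1"
proof -
  have P0: "\<Psi> 0 = 1" and sym: "\<And>h. \<Psi> (- h) = \<Psi> h"
    and psd: "\<And>n (xs :: nat \<Rightarrow> 'a) (c :: nat \<Rightarrow> real). (\<Sum>j<n. \<Sum>k<n. c j * c k * \<Psi> (xs j - xs k)) \<ge> 0"
    using assms unfolding correlation_function_def by auto
  have q: "2 + 2 * s * \<Psi> x \<ge> 0" if s: "s * s = 1" for s :: real
  proof -
    have "0 \<le> (\<Sum>j<(2::nat). \<Sum>k<(2::nat). (if j = 0 then 1 else s) * (if k = 0 then 1 else s) *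
             \<Psi> ((if j = 0 then x else 0) - (if k = 0 then x else 0)))"
      by (rule psd)
    also have "\<dots> = 2 + 2 * s * \<Psi> x"
      by (simp add: numeral_2_eq_2 P0 sym s algebra_simps)
    finally show ?thesis .
  qed
  from q[of 1] q[of "-1"] show ?thesis by auto
qed

lemma fourier_facts:
  fixes \<Psi> :: "'a::euclidean_space \<Rightarrow> real"
  assumes pos: "Re (fourier \<Psi> 0) \<noteq> 0" and cont: "continuous_on UNIV \<Psi>"
  shows "integrable lborel \<Psi>"
    and "\<And>\<omega>. Re (fourier \<Psi> \<omega>) = (2 * pi) powr (- real DIM('a) / 2) * (\<integral>x. \<Psi> x * cos (x \<bullet> \<omega>) \<partial>lborel)"
proof -
  have m[measurable]: "\<Psi> \<in> borel_measurable borel" using cont by (rule borel_measurable_continuous_onI)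
  show I: "integrable lborel \<Psi>"
  proof (rule ccontr)
    assume "\<not> integrable lborel \<Psi>"
    then have "\<not> integrable lborel (\<lambda>x. complex_of_real (\<Psi> x) * cis (- inner x 0))"
      by (simp add: complex_of_real_integrable_eq)
    then have "fourier \<Psi> 0 = 0"
      unfolding fourier_def by (simp add: complex_of_real_integrable_eq not_integrable_integral_eq)
    with pos show False by simp
  qed
  fix \<omega> :: 'a
  have CI: "integrable lborel (\<lambda>x. complex_of_real (\<Psi> x) * cis (- inner x \<omega>))"
  proof (rule Bochner_Integration.integrable_bound[where f="\<lambda>x. complex_of_real (\<Psi> x)"])
    show "integrable lborel (\<lambda>x. complex_of_real (\<Psi> x))" using I by simp
    show "(\<lambda>x. complex_of_real (\<Psi> x) * cis (- inner x \<omega>)) \<in> borel_measurable lborel"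
      by (simp, intro borel_measurable_continuous_onI continuous_intros cont[THEN continuous_on_compose2]) auto
    show "AE x in lborel. norm (complex_of_real (\<Psi> x) * cis (- inner x \<omega>)) \<le> norm (complex_of_real (\<Psi> x))"
      by (simp add: norm_mult)
  qed
  have "Re (LINT x|lborel. complex_of_real (\<Psi> x) * cis (- inner x \<omega>)) = (\<integral>x. Re (complex_of_real (\<Psi> x) * cis (- inner x \<omega>)) \<partial>lborel)"
    using integral_Re[OF CI] by simp
  also have "\<dots> = (\<integral>x. \<Psi> x * cos (x \<bullet> \<omega>) \<partial>lborel)"
    by simp
  finally show "Re (fourier \<Psi> \<omega>) = (2 * pi) powr (- real DIM('a) / 2) * (\<integral>x. \<Psi> x * cos (x \<bullet> \<omega>) \<partial>lborel)"
    unfolding fourier_def by simp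
qed

lemma spectral_cmp:
  fixes \<Psi> K :: "'a::euclidean_space \<Rightarrow> real" and a :: "nat \<Rightarrow> real" and p :: "nat \<Rightarrow> 'a" and n :: nat
  assumes Psi_corr: "correlation_function \<Psi>" and K_corr: "correlation_function K"
    and c: "c\<^sub>1 > 0" "c\<^sub>5 > 0" "c\<^sub>6 > 0"
    and Psi_spec: "\<And>\<omega>. c\<^sub>1 * (1 + (norm \<omega>)\<^sup>2) powr (- m\<^sub>0) \<le> Re (fourier \<Psi> \<omega>)"
    and K_spec: "\<And>\<omega>. c\<^sub>5 * (1 + (norm \<omega>)\<^sup>2) powr (- m\<^sub>0) \<le> Re (fourier K \<omega>) \<and> Re (fourier K \<omega>) \<le> c\<^sub>6 * (1 + (norm \<omega>)\<^sup>2) powr (- m\<^sub>0)"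
  shows "(\<Sum>j<n. \<Sum>k<n. a j * a k * K (p j - p k)) \<le> (c\<^sub>6 / c\<^sub>1) * (\<Sum>j<n. \<Sum>k<n. a j * a k * \<Psi> (p j - p k))"
proof -
  have Pc: "continuous_on UNIV \<Psi>" and Psym: "\<And>h. \<Psi> (- h) = \<Psi> h"
    using Psi_corr unfolding correlation_function_def by auto
  have Kc: "continuous_on UNIV K" and Ksym: "\<And>h. K (- h) = K h"
    using K_corr unfolding correlation_function_def by auto
  have "Re (fourier \<Psi> 0) \<ge> c\<^sub>1" using Psi_spec[of 0] by simp
  then have P0: "Re (fourier \<Psi> 0) \<noteq> 0" using c by auto
  have "Re (fourier K 0) \<ge> c\<^sub>5" using K_spec[of 0] by simp
  then have K0: "Re (fourier K 0) \<noteq> 0" using c by auto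
  note PF = fourier_facts[OF P0 Pc] and KF = fourier_facts[OF K0 Kc]
  define A where "A = c\<^sub>6 / c\<^sub>1"
  have A: "A > 0" using c by (simp add: A_def)
  define G where "G x = A * \<Psi> x - K x" for x
  define \<kappa> where "\<kappa> = (2 * pi) powr (- real DIM('a) / 2)"
  have kpos: "\<kappa> > 0" by (simp add: \<kappa>_def)
  have Gi: "integrable lborel G" unfolding G_def using PF(1) KF(1) by simp
  have Gc: "continuous_on UNIV G" unfolding G_def[abs_def] using Pc Kc by (intro continuous_intros)
  have Gb: "\<bar>G x\<bar> \<le> A + 1" for x
  proof -
    have "\<bar>G x\<bar> \<le> \<bar>A * \<Psi> x\<bar> + \<bar>K x\<bar>" unfolding G_def by (rule abs_triangle_ineq4)
    also have "\<dots> = A * \<bar>\<Psi> x\<bar> + \<bar>K x\<bar>" using A by (simp add: abs_mult)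
    also have "\<dots> \<le> A * 1 + 1"
      using corr_bound[OF Psi_corr, of x] corr_bound[OF K_corr, of x] A by (intro add_mono mult_left_mono) auto
    finally show ?thesis by simp
  qed
  have Gsym: "G (- x) = G x" for x unfolding G_def using Psym Ksym by simp
  have Gs: "(\<integral>x. G x * cos (x \<bullet> \<omega>) \<partial>lborel) \<ge> 0" for \<omega>
  proof -
    let ?w = "(1 + (norm \<omega>)\<^sup>2) powr (- m\<^sub>0)"
    have i1: "integrable lborel (\<lambda>x. \<Psi> x * cos (x \<bullet> \<omega>))"
      using PF(1) by (rule Bochner_Integration.integrable_bound) (auto intro!: borel_measurable_continuous_onI continuous_intros Pc[THEN continuous_on_compose2] AE_I2 mult_left_le simp: abs_mult)
    have i2: "integrable lborel (\<lambda>x. K x * cos (x \<bullet> \<omega>))"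
      using KF(1) by (rule Bochner_Integration.integrable_bound) (auto intro!: borel_measurable_continuous_onI continuous_intros Kc[THEN continuous_on_compose2] AE_I2 mult_left_le simp: abs_mult)
    have "(\<integral>x. G x * cos (x \<bullet> \<omega>) \<partial>lborel) = A * (\<integral>x. \<Psi> x * cos (x \<bullet> \<omega>) \<partial>lborel) - (\<integral>x. K x * cos (x \<bullet> \<omega>) \<partial>lborel)"
      unfolding G_def using i1 i2 by (simp add: left_diff_distrib mult.assoc)
    also have "\<dots> = (A * Re (fourier \<Psi> \<omega>) - Re (fourier K \<omega>)) / \<kappa>"
      unfolding PF(2) KF(2) \<kappa>_def[symmetric] using kpos by (simp add: field_simps)
    also have "\<dots> \<ge> 0"
    proof -
      have "A * Re (fourier \<Psi> \<omega>) \<ge> A * (c\<^sub>1 * ?w)" using Psi_spec[of \<omega>] A by (intro mult_left_mono) auto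
      moreover have "A * (c\<^sub>1 * ?w) = c\<^sub>6 * ?w" using c by (simp add: A_def)
      ultimately show ?thesis using K_spec[of \<omega>] kpos by simp
    qed
    finally show ?thesis .
  qed
  have "0 \<le> (\<Sum>j<n. \<Sum>k<n. a j * a k * G (p j - p k))"
    by (rule psd_from_spectrum[OF Gi Gc Gb Gsym Gs])
  also have "\<dots> = A * (\<Sum>j<n. \<Sum>k<n. a j * a k * \<Psi> (p j - p k)) - (\<Sum>j<n. \<Sum>k<n. a j * a k * K (p j - p k))"
    unfolding G_def by (simp add: sum_subtractf sum_distrib_left algebra_simps)
  finally show ?thesis unfolding A_def by simp
qed

theorem lemma6:
  fixes \<Omega> :: "'a::euclidean_space set"
    and \<Psi> K :: "'a \<Rightarrow> real"
    and \<sigma> \<sigma>\<^sub>\<epsilon> m\<^sub>0 c\<^sub>1 c\<^sub>2 c\<^sub>5 c\<^sub>6 A\<^sub>0 :: real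
  assumes m0: "m\<^sub>0 > real DIM('a) / 2"
    and Psi_corr: "correlation_function \<Psi>" and Psi_pd: "positive_definite_fun \<Psi>"
    and c12: "c\<^sub>1 > 0" "c\<^sub>2 > 0"
    and Psi_spec: "\<And>\<omega>. Im (fourier \<Psi> \<omega>) = 0 \<and>
         c\<^sub>1 * (1 + (norm \<omega>)\<^sup>2) powr (- m\<^sub>0) \<le> Re (fourier \<Psi> \<omega>) \<and>
         Re (fourier \<Psi> \<omega>) \<le> c\<^sub>2 * (1 + (norm \<omega>)\<^sup>2) powr (- m\<^sub>0)"
    and sigma: "\<sigma> > 0" and sigma_eps: "\<sigma>\<^sub>\<epsilon> > 0"
    and K_corr: "correlation_function K"
    and c56: "c\<^sub>5 > 0" "c\<^sub>6 > 0"
    and K_spec: "\<And>\<omega>. Im (fourier K \<omega>) = 0 \<and>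
         c\<^sub>5 * (1 + (norm \<omega>)\<^sup>2) powr (- m\<^sub>0) \<le> Re (fourier K \<omega>) \<and>
         Re (fourier K \<omega>) \<le> c\<^sub>6 * (1 + (norm \<omega>)\<^sup>2) powr (- m\<^sub>0)"
    and A0: "A\<^sub>0 > 0" "AE \<omega> in lborel. norm (fourier K \<omega> / fourier \<Psi> \<omega>) \<le> A\<^sub>0"
    and Mercer: "\<exists>(lam :: nat \<Rightarrow> real) (\<phi> :: nat \<Rightarrow> 'a \<Rightarrow> real) (C :: real).
         L2_onb \<Omega> \<phi> \<and> (\<forall>k. lam k > 0) \<and>
         (\<forall>x\<in>\<Omega>. \<forall>y\<in>\<Omega>. (\<lambda>k. lam k * \<phi> k x * \<phi> k y) sums K (x - y)) \<and>
         (\<forall>k. AE x in lebesgue_on \<Omega>. \<bar>\<phi> k x\<bar> \<le> C)"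
  shows "\<exists>c > 0. \<forall>n (xs :: nat \<Rightarrow> 'a) x. (\<forall>j<n. xs j \<in> \<Omega>) \<longrightarrow> x \<in> \<Omega> \<longrightarrow>
           cond_var \<sigma> \<Psi> (\<sigma>\<^sub>\<epsilon>\<^sup>2 / \<sigma>\<^sup>2) n xs x \<ge>
             c * post_var_factor K (\<sigma>\<^sub>\<epsilon>\<^sup>2 / \<sigma>\<^sup>2) n xs x"
proof -
  define \<mu> where "\<mu> = \<sigma>\<^sub>\<epsilon>\<^sup>2 / \<sigma>\<^sup>2"
  have mu: "\<mu> > 0" using sigma sigma_eps by (simp add: \<mu>_def)
  define A where "A = max 1 (c\<^sub>6 / c\<^sub>1)"
  have A1: "A \<ge> 1" by (simp add: A_def)
  have Psym: "\<And>h. \<Psi> (-h) = \<Psi> h" and Ksym: "\<And>h. K (-h) = K h"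
    using Psi_corr K_corr unfolding correlation_function_def by auto
  have Ppsd: "\<And>n xs (c::nat\<Rightarrow>real). (\<Sum>j<n. \<Sum>k<n. c j * c k * \<Psi> (xs j - xs k)) \<ge> 0"
    using Psi_corr unfolding correlation_function_def by auto
  have Kpsd: "\<And>n xs (c::nat\<Rightarrow>real). (\<Sum>j<n. \<Sum>k<n. c j * c k * K (xs j - xs k)) \<ge> 0"
    using K_corr unfolding correlation_function_def by auto
  have cmpA: "qf K n xs x w \<le> A * qf \<Psi> n xs x w" for n xs x w
  proof -
    have "qf K n xs x w \<le> (c\<^sub>6 / c\<^sub>1) * qf \<Psi> n xs x w"
      unfolding qf_quad[where \<Phi>=K, OF Ksym] qf_quad[where \<Phi>=\<Psi>, OF Psym]
      by (rule spectral_cmp[OF Psi_corr K_corr c12(1) c56(1) c56(2)]) (use Psi_spec K_spec in auto)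
    also have "\<dots> \<le> A * qf \<Psi> n xs x w"
    proof -
      have "qf \<Psi> n xs x w \<ge> 0"
        unfolding qf_quad[where \<Phi>=\<Psi>, OF Psym]
        by (rule Ppsd[of "\<lambda>j. if j = 0 then 1 else - w (j - 1)" "\<lambda>j. if j = 0 then x else xs (j - 1)" "Suc n"])
      then show ?thesis unfolding A_def by (intro mult_right_mono) auto
    qed
    finally show ?thesis .
  qed
  show ?thesis
  proof (intro exI[of _ "\<sigma>\<^sup>2 / A"] conjI allI impI)
    show "\<sigma>\<^sup>2 / A > 0" using A1 sigma by simp
    fix n xs x
    obtain uP where uP: "\<forall>i<n. (\<Sum>k<n. \<Psi> (xs i - xs k) * uP k) + \<mu> * uP i = \<Psi> (x - xs i)"
      "post_var_factor \<Psi> \<mu> n xs x = \<Psi> 0 - (\<Sum>i<n. \<Psi> (x - xs i) * uP i)"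
      using pvf_sum[OF Psi_corr mu] by blast
    obtain uK where uK: "\<forall>i<n. (\<Sum>k<n. K (xs i - xs k) * uK k) + \<mu> * uK i = K (x - xs i)"
      "post_var_factor K \<mu> n xs x = K 0 - (\<Sum>i<n. K (x - xs i) * uK i)"
      using pvf_sum[OF K_corr mu] by blast
    have PK: "post_var_factor K \<mu> n xs x \<le> qf K n xs x uP + \<mu> * (\<Sum>i<n. (uP i)\<^sup>2)"
      unfolding uK(2) by (rule var_ineq(1)[OF Ksym Kpsd]) (use mu uK(1) in auto)
    have PP: "post_var_factor \<Psi> \<mu> n xs x = qf \<Psi> n xs x uP + \<mu> * (\<Sum>i<n. (uP i)\<^sup>2)"
      unfolding uP(2) by (rule var_ineq(2)[OF Psym Ppsd]) (use mu uP(1) in auto)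
    have s: "\<mu> * (\<Sum>i<n. (uP i)\<^sup>2) \<ge> 0" using mu by (simp add: sum_nonneg)
    have "post_var_factor K \<mu> n xs x \<le> A * post_var_factor \<Psi> \<mu> n xs x"
    proof -
      have e: "A * post_var_factor \<Psi> \<mu> n xs x = A * qf \<Psi> n xs x uP + A * (\<mu> * (\<Sum>i<n. (uP i)\<^sup>2))"
        by (simp add: PP distrib_left)
      have "A * (\<mu> * (\<Sum>i<n. (uP i)\<^sup>2)) \<ge> \<mu> * (\<Sum>i<n. (uP i)\<^sup>2)"
        using mult_right_mono[OF A1 s] by simp
      then show ?thesis using PK cmpA[of n xs x uP] e by linarith
    qed
    then have "\<sigma>\<^sup>2 / A * post_var_factor K \<mu> n xs x \<le> \<sigma>\<^sup>2 * post_var_factor \<Psi> \<mu> n xs x"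
      using A1 sigma by (simp add: field_simps)
    then show "\<sigma>\<^sup>2 / A * post_var_factor K (\<sigma>\<^sub>\<epsilon>\<^sup>2 / \<sigma>\<^sup>2) n xs x \<le> cond_var \<sigma> \<Psi> (\<sigma>\<^sub>\<epsilon>\<^sup>2 / \<sigma>\<^sup>2) n xs x"
      unfolding cond_var_def \<mu>_def .
  qed
qed

end
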